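(* Let $0<\alpha<\pi/4$ and $0<\beta\le\pi/4$, and consider the system on $S^2$ described in the context. There is no normal extremal pair $(x,\lambda)$ with $x(0)=N=(0,0,1)$ and a time $t_c>0$ such that the extremal is bang-bang on $[0,t_c]$ and totally singular on an interval $[t_c,t_c+\varepsilon]$, $\varepsilon>0$.
   Context: The system is $\dot x=Fx+u_1G_1x+u_2G_2x$ on the unit sphere $S^2\subset\mathbb R^3$, measurable controls $|u_i|\le1$, with $F=\cos\alpha\begin{pmatrix}0&-1&0\\1&0&0\\0&0&0\end{pmatrix}$, $G_1=\sin\alpha\sin\beta\begin{pmatrix}0&0&0\\0&0&-1\\0&1&0\end{pmatrix}$, $G_2=\sin\alpha\cos\beta\begin{pmatrix}0&0&-1\\0&0&0\\1&0&0\end{pmatrix}$. An extremal pair: trajectory $x$ with control $u$, Lipschitz row vector $\lambda(t)\in\mathbb R^3$ with $\lambda(t)\cdot x(t)=0$, $\lambda(t)\ne0$, and constant $\lambda_0\le0$, such that a.e. $\dot\lambda=-\lambda(F+u_1G_1+u_2G_2)$, $u(t)$ maximizes $\lambda Fx+u_1\lambda G_1x+u_2\lambda G_2x+\lambda_0$ over $[-1,1]^2$, and the maximum is $0$; normal if $\lambda_0<0$. Switching functions $\phi_i=\lambda G_ix$; totally singular on an interval means $\phi_1\equiv\phi_2\equiv0$ there. Bang-bang on an interval: finitely many arcs on which $u$ is a.e. constant in $\{-1,1\}^2$. *)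

theory Defs
  imports "HOL-Analysis.Analysis"
begin

definition Fm :: "real \<Rightarrow> real^3^3" where
  "Fm \<alpha> = cos \<alpha> *\<^sub>R vector [vector [0,-1,0], vector [1,0,0], vector [0,0,0]]"

definition G1m :: "real \<Rightarrow> real \<Rightarrow> real^3^3" where
  "G1m \<alpha> \<beta> = (sin \<alpha> * sin \<beta>) *\<^sub>R vector [vector [0,0,0], vector [0,0,-1], vector [0,1,0]]"

definition G2m :: "real \<Rightarrow> real \<Rightarrow> real^3^3" where
  "G2m \<alpha> \<beta> = (sin \<alpha> * cos \<beta>) *\<^sub>R vector [vector [0,0,-1], vector [0,0,0], vector [1,0,0]]"

definition Am :: "real \<Rightarrow> real \<Rightarrow> real \<Rightarrow> real \<Rightarrow> real^3^3" where
  "Am \<alpha> \<beta> v1 v2 = Fm \<alpha> + v1 *\<^sub>R G1m \<alpha> \<beta> + v2 *\<^sub>R G2m \<alpha> \<beta>"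

definition Ham :: "real \<Rightarrow> real \<Rightarrow> real^3 \<Rightarrow> real^3 \<Rightarrow> real \<Rightarrow> real \<Rightarrow> real \<Rightarrow> real" where
  "Ham \<alpha> \<beta> l y l0 v1 v2 = l \<bullet> (Fm \<alpha> *v y) + v1 * (l \<bullet> (G1m \<alpha> \<beta> *v y))
      + v2 * (l \<bullet> (G2m \<alpha> \<beta> *v y)) + l0"

definition north :: "real^3" where
  "north = vector [0,0,1]"

text \<open>Extremal pair on the time interval [0,T]: admissible measurable control with |u_i| \<le> 1,
  trajectory on the unit sphere that is a Caratheodory solution of the system (absolutely continuous,
  given in integral form), Lipschitz adjoint lambda with lambda x = 0, lambda nonzero, adjoint equation a.e.,
  maximum condition a.e. with maximum value 0, and constant lambda0 \<le> 0.\<close>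
definition extremal ::
  "real \<Rightarrow> real \<Rightarrow> real \<Rightarrow> (real \<Rightarrow> real) \<Rightarrow> (real \<Rightarrow> real) \<Rightarrow> (real \<Rightarrow> real^3)
     \<Rightarrow> (real \<Rightarrow> real^3) \<Rightarrow> real \<Rightarrow> bool" where
  "extremal \<alpha> \<beta> T u1 u2 x l l0 \<longleftrightarrow>
     0 < T \<and>
     set_borel_measurable lborel {0..T} u1 \<and> set_borel_measurable lborel {0..T} u2 \<and>
     (\<forall>t\<in>{0..T}. \<bar>u1 t\<bar> \<le> 1 \<and> \<bar>u2 t\<bar> \<le> 1) \<and>
     (\<forall>t\<in>{0..T}. norm (x t) = 1) \<and>
     (\<forall>t\<in>{0..T}. ((\<lambda>s. Am \<alpha> \<beta> (u1 s) (u2 s) *v x s) has_integral (x t - x 0)) {0..t}) \<and>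
     (\<exists>C. C-lipschitz_on {0..T} l) \<and>
     (\<forall>t\<in>{0..T}. l t \<bullet> x t = 0 \<and> l t \<noteq> 0) \<and>
     l0 \<le> 0 \<and>
     (AE t in lborel. t \<in> {0..T} \<longrightarrow>
        (l has_vector_derivative (- (l t v* Am \<alpha> \<beta> (u1 t) (u2 t)))) (at t)) \<and>
     (AE t in lborel. t \<in> {0..T} \<longrightarrow>
        (\<forall>v1\<in>{-1..1}. \<forall>v2\<in>{-1..1}.
           Ham \<alpha> \<beta> (l t) (x t) l0 v1 v2 \<le> Ham \<alpha> \<beta> (l t) (x t) l0 (u1 t) (u2 t)) \<and>
        Ham \<alpha> \<beta> (l t) (x t) l0 (u1 t) (u2 t) = 0)"

definition switching1 :: "real \<Rightarrow> real \<Rightarrow> real^3 \<Rightarrow> real^3 \<Rightarrow> real" where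
  "switching1 \<alpha> \<beta> l y = l \<bullet> (G1m \<alpha> \<beta> *v y)"

definition switching2 :: "real \<Rightarrow> real \<Rightarrow> real^3 \<Rightarrow> real^3 \<Rightarrow> real" where
  "switching2 \<alpha> \<beta> l y = l \<bullet> (G2m \<alpha> \<beta> *v y)"

definition bang_bang_on :: "(real \<Rightarrow> real) \<Rightarrow> (real \<Rightarrow> real) \<Rightarrow> real \<Rightarrow> real \<Rightarrow> bool" where
  "bang_bang_on u1 u2 a b \<longleftrightarrow>
     (\<exists>(ts::nat \<Rightarrow> real) k. 0 < k \<and> ts 0 = a \<and> ts k = b \<and> (\<forall>i<k. ts i < ts (Suc i)) \<and>
        (\<forall>i<k. \<exists>c1\<in>{-1,1}. \<exists>c2\<in>{-1,1}.
            AE t in lborel. t \<in> {ts i<..<ts (Suc i)} \<longrightarrow> u1 t = c1 \<and> u2 t = c2))"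

definition totally_singular_on ::
  "real \<Rightarrow> real \<Rightarrow> (real \<Rightarrow> real^3) \<Rightarrow> (real \<Rightarrow> real^3) \<Rightarrow> real \<Rightarrow> real \<Rightarrow> bool" where
  "totally_singular_on \<alpha> \<beta> x l a b \<longleftrightarrow>
     (\<forall>t\<in>{a..b}. switching1 \<alpha> \<beta> (l t) (x t) = 0 \<and> switching2 \<alpha> \<beta> (l t) (x t) = 0)"

end

theory Submission
  imports Defs
begin

lemma AE_exists_Ioo:
  assumes "AE t in lborel. P t" "a < (b::real)"
  shows "\<exists>t\<in>{a<..<b}. P t"
proof (rule ccontr)
  assume H: "\<not> ?thesis"
  from assms(1) obtain N where N: "{t \<in> space lborel. \<not> P t} \<subseteq> N" "emeasure lborel N = 0" "N \<in> sets lborel"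
    by (auto elim!: AE_E)
  have "{a<..<b} \<subseteq> N" using H N(1) by auto
  hence "emeasure lborel {a<..<b} \<le> emeasure lborel N" by (intro emeasure_mono N(3))
  with N(2) assms(2) show False by simp
qed

lemma g_neg:
  fixes g :: "real \<Rightarrow> real"
  assumes "\<And>t. t \<in> S \<Longrightarrow> (g has_real_derivative 0) (at t)"
  shows "negligible (g ` S)"
proof -
  define h :: "real^1 \<Rightarrow> real^1" where "h y = g (y$1) *\<^sub>R 1" for y
  define S1 where "S1 = (vec :: real \<Rightarrow> real^1) ` S"
  have "negligible (h ` S1)"
  proof (rule baby_Sard[where f' = "\<lambda>_ _. 0"])
    show "CARD(1) \<le> CARD(1)" by simp
    show "rank (matrix ((\<lambda>_. 0) :: real^1 \<Rightarrow> real^1)) < CARD(1)"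
      by (simp add: matrix_def rank_0 zero_vec_def[symmetric])
  next
    fix y assume "y \<in> S1"
    then obtain t where t: "t \<in> S" "y = vec t" by (auto simp: S1_def)
    have d: "(g has_derivative (*) 0) (at (y$1))" using assms[OF t(1)] t(2)
      by (simp add: has_field_derivative_def)
    have "(h has_derivative (\<lambda>z. (0 * z$1) *\<^sub>R 1)) (at y)"
    proof -
      have lin: "((\<lambda>y::real^1. y$1) has_derivative (\<lambda>y. y$1)) (at y)"
        by (rule bounded_linear_imp_has_derivative[OF bounded_linear_vec_nth])
      show ?thesis
      unfolding h_def
      by (rule has_derivative_scaleR_left[OF has_derivative_compose[OF lin d]])
    qed
    then show "(h has_derivative (\<lambda>_. 0)) (at y within S1)"
      by (auto intro: has_derivative_at_withinI)
  qed
  moreover have "g ` S = (\<lambda>z. z$1) ` (h ` S1)"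
    by (force simp: h_def S1_def image_iff)
  moreover have "negligible ((\<lambda>z::real^1. z$1) ` (h ` S1))"
    by (rule negligible_differentiable_image_negligible) (use calculation in \<open>auto intro!: bounded_linear_imp_differentiable_on bounded_linear_vec_nth\<close>)
  ultimately show ?thesis by simp
qed
lemma lip_const:
  fixes g :: "real \<Rightarrow> real"
  assumes lip: "C-lipschitz_on {a..b} g" and ab: "a \<le> b"
    and ae: "AE t in lborel. t \<in> {a..b} \<longrightarrow> (g has_real_derivative 0) (at t)"
  shows "g b = g a"
proof -
  define S where "S = {t \<in> {a..b}. (g has_real_derivative 0) (at t)}"
  define N where "N = {a..b} - S"
  from ae obtain N0 where N0: "{t \<in> space lborel. \<not> (t \<in> {a..b} \<longrightarrow> (g has_real_derivative 0) (at t))} \<subseteq> N0"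
      "emeasure lborel N0 = 0" "N0 \<in> sets lborel"
    by (auto elim!: AE_E)
  have "N \<subseteq> N0" using N0(1) by (auto simp: N_def S_def)
  moreover have "negligible N0"
    unfolding negligible_iff_null_sets
    using N0 by (metis null_setsI null_sets_completionI)
  ultimately have negN: "negligible N" by (rule negligible_subset[rotated])
  have C: "\<And>x y. x \<in> {a..b} \<Longrightarrow> y \<in> {a..b} \<Longrightarrow> norm (g y - g x) \<le> C * norm (y - x)"
    using lipschitz_onD[OF lip] by (simp add: dist_norm)
  have nN: "negligible (g ` N)"
    apply (rule negligible_locally_Lipschitz_image[OF _ negN])
     apply simp
    apply (rule_tac x=UNIV in exI, rule_tac x=C in exI)
    using C by (auto simp: N_def)
  have nS: "negligible (g ` S)"
    by (rule g_neg) (auto simp: S_def)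
  have neg: "negligible (g ` {a..b})"
  proof -
    have "{a..b} = S \<union> N" by (auto simp: N_def S_def)
    hence "g ` {a..b} = g ` S \<union> g ` N" by auto
    thus ?thesis using nN nS by (simp add: negligible_Un)
  qed
  have cont: "continuous_on {a..b} g" using lip by (rule lipschitz_on_continuous_on)
  show ?thesis
  proof (rule ccontr)
    assume ne: "g b \<noteq> g a"
    have conn: "connected (g ` {a..b})" using cont by (intro connected_continuous_image) auto
    have ga: "g a \<in> g ` {a..b}" using ab by (intro imageI) simp
    have gb: "g b \<in> g ` {a..b}" using ab by (intro imageI) simp
    have key: "\<not> negligible {p..q}" if "p < q" for p q :: real
    proof -
      have "box p q \<noteq> {}" using that by (simp add: box_real(1))
      hence "\<not> negligible (cbox p q)" using negligible_interval(1) by blast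
      thus ?thesis by (simp add: cbox_interval)
    qed
    show False
    proof (cases "g a < g b")
      case True
      have "{g a..g b} \<subseteq> g ` {a..b}" by (rule connected_contains_Icc[OF conn ga gb])
      with key[OF True] neg show False using negligible_subset by blast
    next
      case False
      with ne have lt: "g b < g a" by auto
      have "{g b..g a} \<subseteq> g ` {a..b}" by (rule connected_contains_Icc[OF conn gb ga])
      with key[OF lt] neg show False using negligible_subset by blast
    qed
  qed
qed

lemmas cs = Fm_def G1m_def G2m_def Am_def matrix_vector_mult_def vector_matrix_mult_def inner_vec_def sum_3 vector_3 vector_1 vector_2

lemma ham_eq: "Ham \<alpha> \<beta> l y l0 v1 v2 = cos \<alpha> * (l$2*y$1 - l$1*y$2) + v1*(sin \<alpha> * sin \<beta>*(l$3*y$2 - l$2*y$3)) + v2*(sin \<alpha> * cos \<beta>*(l$3*y$1 - l$1*y$3)) + l0"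
  by (simp add: Ham_def cs algebra_simps)
lemma sw1_eq: "switching1 \<alpha> \<beta> l y = sin \<alpha> * sin \<beta>*(l$3*y$2 - l$2*y$3)"
  by (simp add: switching1_def cs algebra_simps)
lemma sw2_eq: "switching2 \<alpha> \<beta> l y = sin \<alpha> * cos \<beta>*(l$3*y$1 - l$1*y$3)"
  by (simp add: switching2_def cs algebra_simps)
lemma skew: "l \<bullet> (l v* Am \<alpha> \<beta> v1 v2) = 0"
  by (simp add: cs algebra_simps)
lemma lagr: fixes l y :: "real^3" shows "(l \<bullet> l) * (y \<bullet> y) - (l \<bullet> y)^2 = (l$3*y$2 - l$2*y$3)^2 + (l$3*y$1 - l$1*y$3)^2 + (l$2*y$1 - l$1*y$2)^2"
  by (simp add: inner_vec_def sum_3 power2_eq_square algebra_simps)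
lemma comp_le: "norm (y::real^3) \<le> 1 \<Longrightarrow> \<bar>y$i\<bar> \<le> 1"
  using component_le_norm_cart[of y i] by linarith
lemma tri: fixes a b :: real assumes "\<bar>a\<bar> \<le> 1" "\<bar>b\<bar> \<le> 1"
  shows "\<bar>-a-b\<bar> \<le> 3" "\<bar>a-b\<bar> \<le> 3" "\<bar>a+b\<bar> \<le> 3" using assms by arith+
lemma Am_bound:
  assumes "\<bar>v1\<bar> \<le> 1" "\<bar>v2\<bar> \<le> 1" "norm y = (1::real)"
  shows "norm (Am \<alpha> \<beta> v1 v2 *v y) \<le> 9"
proof -
  have y: "\<bar>y$1\<bar> \<le> 1" "\<bar>y$2\<bar> \<le> 1" "\<bar>y$3\<bar> \<le> 1" using comp_le assms(3) by auto
  have "\<bar>(Am \<alpha> \<beta> v1 v2 *v y)$i\<bar> \<le> 3" for i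
  proof -
    have b: "\<bar>a * b\<bar> \<le> 1" if "\<bar>a\<bar> \<le> 1" "\<bar>b\<bar> \<le> 1" for a b :: real
      using that by (simp add: abs_mult mult_le_one)
    have c: "\<bar>cos \<alpha>\<bar> \<le> 1" "\<bar>sin \<alpha> * sin \<beta>\<bar> \<le> 1" "\<bar>sin \<alpha> * cos \<beta>\<bar> \<le> 1"
      by (auto intro!: b)
    have d: "\<bar>v1 * (sin \<alpha> * sin \<beta>)\<bar> \<le> 1" "\<bar>v2 * (sin \<alpha> * cos \<beta>)\<bar> \<le> 1"
      using assms c by (auto intro!: b)
    show ?thesis
      using exhaust_3[of i]
      apply (elim disjE)
        apply (simp_all add: cs)
        apply (rule tri(1)[OF b[of "cos \<alpha>" "y$2"] b[of "v2 * (sin \<alpha> * cos \<beta>)" "y$3"]])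
      using c d y apply auto[4]
       apply (rule tri(2)[OF b[of "cos \<alpha>" "y$1"] b[of "v1 * (sin \<alpha> * sin \<beta>)" "y$3"]])
      using c d y apply auto[4]
       apply (rule tri(3)[OF b[of "v2 * (sin \<alpha> * cos \<beta>)" "y$1"] b[of "v1 * (sin \<alpha> * sin \<beta>)" "y$2"]])
      using c d y apply auto[4]
      done
  qed
  note h = this
  show ?thesis
    using norm_le_l1_cart[of "Am \<alpha> \<beta> v1 v2 *v y"] h[of 1] h[of 2] h[of 3] by (simp add: sum_3)
qed


lemma tends_right:
  fixes f :: "real \<Rightarrow> 'a::real_normed_vector"
  assumes "0 < T" "\<And>t. 0 < t \<Longrightarrow> t < T \<Longrightarrow> norm (f t - f 0) \<le> K * t"
  shows "(f \<longlongrightarrow> f 0) (at_right 0)"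
proof -
  have "((\<lambda>t. K * t) \<longlongrightarrow> K * 0) (at_right 0)" by (intro tendsto_intros)
  hence lim: "((\<lambda>t. K * t) \<longlongrightarrow> 0) (at_right 0)" by simp
  have ev: "\<forall>\<^sub>F t in at_right 0. norm (f t - f 0) \<le> K * t"
    using eventually_at_right_real[OF assms(1)] by eventually_elim (use assms(2) in auto)
  have "((\<lambda>t. f t - f 0) \<longlongrightarrow> 0) (at_right 0)"
    by (rule Lim_null_comparison[OF ev lim])
  thus ?thesis by (simp add: Lim_null[symmetric])
qed

lemma norm_const:
  fixes l :: "real \<Rightarrow> real^3"
  assumes lip: "C-lipschitz_on {0..T} l"
    and ae: "AE t in lborel. t \<in> {0..T} \<longrightarrow> (l has_vector_derivative (- (l t v* Am \<alpha> \<beta> (u1 t) (u2 t)))) (at t)"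
    and t1: "t1 \<in> {0..T}"
  shows "l t1 \<bullet> l t1 = l 0 \<bullet> l 0"
proof -
  define g where "g t = l t \<bullet> l t" for t
  define K where "K = norm (l 0) + C * T"
  have C0: "0 \<le> C" using lipschitz_on_nonneg[OF lip] .
  have dl: "norm (l s - l t) \<le> C * \<bar>s - t\<bar>" if "s \<in> {0..T}" "t \<in> {0..T}" for s t
    using lipschitz_onD[OF lip that] by (simp add: dist_norm)
  have bnd: "norm (l s) \<le> K" if "s \<in> {0..T}" for s
  proof -
    have "norm (l s) \<le> norm (l 0) + norm (l s - l 0)" by (metis norm_triangle_sub add.commute)
    also have "\<dots> \<le> norm (l 0) + C * \<bar>s - 0\<bar>" using dl[OF that, of 0] that by auto
    also have "\<dots> \<le> K" using that C0 by (auto simp: K_def intro!: mult_left_mono)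
    finally show ?thesis .
  qed
  have "(2 * K * C)-lipschitz_on {0..t1} g"
  proof (rule lipschitz_onI)
    have "0 \<in> {0..T}" using t1 by auto
    hence "0 \<le> K" using bnd[of 0] norm_ge_zero[of "l 0"] by linarith
    then show "0 \<le> 2 * K * C" using C0 by simp
    fix s t assume st: "s \<in> {0..t1}" "t \<in> {0..t1}"
    hence st': "s \<in> {0..T}" "t \<in> {0..T}" using t1 by auto
    have "g s - g t = (l s - l t) \<bullet> (l s + l t)" by (simp add: g_def algebra_simps inner_commute)
    hence "\<bar>g s - g t\<bar> \<le> norm (l s - l t) * norm (l s + l t)"
      by (metis Cauchy_Schwarz_ineq2)
    also have "\<dots> \<le> (C * \<bar>s - t\<bar>) * (2 * K)"
    proof (rule mult_mono)
      show "norm (l s + l t) \<le> 2 * K" using bnd[OF st'(1)] bnd[OF st'(2)] norm_triangle_ineq[of "l s" "l t"] by linarith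
    qed (use dl[OF st'] C0 in auto)
    finally show "dist (g s) (g t) \<le> 2 * K * C * dist s t" by (simp add: dist_real_def mult_ac)
  qed
  moreover have "AE t in lborel. t \<in> {0..t1} \<longrightarrow> (g has_real_derivative 0) (at t)"
    using ae
  proof eventually_elim
    case (elim t)
    show ?case
    proof
      assume "t \<in> {0..t1}"
      hence "t \<in> {0..T}" using t1 by auto
      with elim have d: "(l has_derivative (\<lambda>h. h *\<^sub>R (- (l t v* Am \<alpha> \<beta> (u1 t) (u2 t))))) (at t)"
        by (simp add: has_vector_derivative_def)
      have "(g has_derivative (\<lambda>h. l t \<bullet> (h *\<^sub>R (- (l t v* Am \<alpha> \<beta> (u1 t) (u2 t)))) + (h *\<^sub>R (- (l t v* Am \<alpha> \<beta> (u1 t) (u2 t)))) \<bullet> l t)) (at t)"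
        unfolding g_def by (rule has_derivative_inner[OF d d])
      moreover have "(\<lambda>h. l t \<bullet> (h *\<^sub>R (- (l t v* Am \<alpha> \<beta> (u1 t) (u2 t)))) + (h *\<^sub>R (- (l t v* Am \<alpha> \<beta> (u1 t) (u2 t)))) \<bullet> l t) = (*) 0"
        using skew[of "l t" \<alpha> \<beta> "u1 t" "u2 t"] by (auto simp: inner_commute)
      ultimately show "(g has_real_derivative 0) (at t)" by (simp add: has_field_derivative_def)
    qed
  qed
  ultimately have "g t1 = g 0" using t1 by (intro lip_const) auto
  thus ?thesis by (simp add: g_def)
qed


lemma sgn_mult_self: "sgn (a::real) * a = \<bar>a\<bar>"
  by (auto simp: sgn_if)

lemma u_le: "\<bar>u\<bar> \<le> 1 \<Longrightarrow> u * (a::real) \<le> \<bar>a\<bar>"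
  by (metis abs_ge_zero abs_le_D1 abs_mult mult.commute mult_left_le)

lemma cs_ineq: "(\<bar>a * p\<bar> + \<bar>c * q\<bar>)^2 \<le> (a^2 + c^2) * (p^2 + q^2::real)"
proof -
  have "(\<bar>a\<bar> * \<bar>p\<bar> + \<bar>c\<bar> * \<bar>q\<bar>)^2 + (\<bar>a\<bar> * \<bar>q\<bar> - \<bar>c\<bar> * \<bar>p\<bar>)^2 = (\<bar>a\<bar>^2 + \<bar>c\<bar>^2) * (\<bar>p\<bar>^2 + \<bar>q\<bar>^2)"
    by (simp add: power2_eq_square algebra_simps)
  thus ?thesis by (simp add: abs_mult) (smt (verit) zero_le_power2)
qed

lemma sin_lt_cos: assumes "0 < \<alpha>" "\<alpha> < pi/4" shows "sin \<alpha> ^ 2 < cos \<alpha> ^ 2"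
proof -
  have "sin \<alpha> < sin (pi/4)" using assms by (intro sin_monotone_2pi) auto
  moreover have "cos (pi/4) < cos \<alpha>" using assms by (intro cos_monotone_0_pi) auto
  moreover have "0 < sin \<alpha>" using assms by (intro sin_gt_zero) auto
  ultimately show ?thesis by (simp add: sin_45 cos_45 power_strict_mono)
qed

theorem corollary3:
  fixes \<alpha> \<beta> :: real
  assumes "0 < \<alpha>" "\<alpha> < pi / 4" "0 < \<beta>" "\<beta> \<le> pi / 4"
  shows "\<not> (\<exists>u1 u2 x l l0 tc \<epsilon> T.
            0 < tc \<and> 0 < \<epsilon> \<and> tc + \<epsilon> \<le> T \<and>
            extremal \<alpha> \<beta> T u1 u2 x l l0 \<and> l0 < 0 \<and> x 0 = north \<and>
            bang_bang_on u1 u2 0 tc \<and> totally_singular_on \<alpha> \<beta> x l tc (tc + \<epsilon>))"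
proof
  assume "\<exists>u1 u2 x l l0 tc \<epsilon> T.
            0 < tc \<and> 0 < \<epsilon> \<and> tc + \<epsilon> \<le> T \<and>
            extremal \<alpha> \<beta> T u1 u2 x l l0 \<and> l0 < 0 \<and> x 0 = north \<and>
            bang_bang_on u1 u2 0 tc \<and> totally_singular_on \<alpha> \<beta> x l tc (tc + \<epsilon>)"
  then obtain u1 u2 x l l0 tc \<epsilon> T where
    tc: "0 < tc" "0 < \<epsilon>" "tc + \<epsilon> \<le> T" and ex: "extremal \<alpha> \<beta> T u1 u2 x l l0"
    and x0: "x 0 = north" and ts: "totally_singular_on \<alpha> \<beta> x l tc (tc + \<epsilon>)"
    by blast
  from ex have T0: "0 < T"
    and ub: "\<And>t. t \<in> {0..T} \<Longrightarrow> \<bar>u1 t\<bar> \<le> 1 \<and> \<bar>u2 t\<bar> \<le> 1"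
    and xn: "\<And>t. t \<in> {0..T} \<Longrightarrow> norm (x t) = 1"
    and xint: "\<And>t. t \<in> {0..T} \<Longrightarrow> ((\<lambda>s. Am \<alpha> \<beta> (u1 s) (u2 s) *v x s) has_integral (x t - x 0)) {0..t}"
    and lip: "\<exists>C. C-lipschitz_on {0..T} l"
    and lx: "\<And>t. t \<in> {0..T} \<Longrightarrow> l t \<bullet> x t = 0 \<and> l t \<noteq> 0"
    and aed: "AE t in lborel. t \<in> {0..T} \<longrightarrow>
        (l has_vector_derivative (- (l t v* Am \<alpha> \<beta> (u1 t) (u2 t)))) (at t)"
    and aem: "AE t in lborel. t \<in> {0..T} \<longrightarrow>
        (\<forall>v1\<in>{-1..1}. \<forall>v2\<in>{-1..1}.
           Ham \<alpha> \<beta> (l t) (x t) l0 v1 v2 \<le> Ham \<alpha> \<beta> (l t) (x t) l0 (u1 t) (u2 t)) \<and>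
        Ham \<alpha> \<beta> (l t) (x t) l0 (u1 t) (u2 t) = 0"
    unfolding extremal_def by blast+
  from lip obtain C where lipC: "C-lipschitz_on {0..T} l" by blast
  define P1 where "P1 t = l t$3 * x t$2 - l t$2 * x t$3" for t
  define P2 where "P2 t = l t$3 * x t$1 - l t$1 * x t$3" for t
  define P3 where "P3 t = l t$2 * x t$1 - l t$1 * x t$2" for t
  define M where "M t = cos \<alpha> * P3 t + \<bar>sin \<alpha> * sin \<beta> * P1 t\<bar> + \<bar>sin \<alpha> * cos \<beta> * P2 t\<bar> + l0" for t
  have aeM: "AE t in lborel. t \<in> {0..T} \<longrightarrow> M t = 0"
    using aem
  proof eventually_elim
    case (elim t)
    show ?case
    proof
      assume t: "t \<in> {0..T}"
      define a1 where "a1 = sin \<alpha> * sin \<beta> * P1 t"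
      define a2 where "a2 = sin \<alpha> * cos \<beta> * P2 t"
      have H: "Ham \<alpha> \<beta> (l t) (x t) l0 v1 v2 = cos \<alpha> * P3 t + v1 * a1 + v2 * a2 + l0" for v1 v2
        by (simp add: ham_eq a1_def a2_def P1_def P2_def P3_def)
      have s: "sgn a1 \<in> {-1..1}" "sgn a2 \<in> {-1..1}" by (auto simp: sgn_if)
      from elim t have "Ham \<alpha> \<beta> (l t) (x t) l0 (sgn a1) (sgn a2) \<le> 0"
        "Ham \<alpha> \<beta> (l t) (x t) l0 (u1 t) (u2 t) = 0" using s by auto
      hence "cos \<alpha> * P3 t + \<bar>a1\<bar> + \<bar>a2\<bar> + l0 \<le> 0" "cos \<alpha> * P3 t + u1 t * a1 + u2 t * a2 + l0 = 0"
        by (simp_all add: H sgn_mult_self)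
      moreover have "u1 t * a1 \<le> \<bar>a1\<bar>" "u2 t * a2 \<le> \<bar>a2\<bar>" using ub[OF t] by (auto intro: u_le)
      ultimately show "M t = 0" unfolding M_def a1_def[symmetric] a2_def[symmetric] by linarith
    qed
  qed
  have xb: "norm (x t - x 0) \<le> 9 * t" if "0 < t" "t < T" for t
  proof -
    have "t \<in> {0..T}" using that by auto
    have "norm (Am \<alpha> \<beta> (u1 s) (u2 s) *v x s) \<le> 9" if "s \<in> {0..t} - {}" for s
    proof -
      have "s \<in> {0..T}" using that \<open>t < T\<close> by auto
      thus ?thesis using xn ub by (intro Am_bound) auto
    qed
    from has_integral_bound_real[OF _ _ xint[OF \<open>t \<in> {0..T}\<close>], of 9 "{}", OF _ _ this]
    show ?thesis using that by simp
  qed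
  have lb: "norm (l t - l 0) \<le> C * t" if "0 < t" "t < T" for t
    using lipschitz_onD[OF lipC, of t 0] that by (auto simp: dist_norm)
  have xl: "(x \<longlongrightarrow> x 0) (at_right 0)" by (rule tends_right[OF T0 xb])
  have ll: "(l \<longlongrightarrow> l 0) (at_right 0)" by (rule tends_right[OF T0 lb])
  have Ml: "(M \<longlongrightarrow> M 0) (at_right 0)"
    unfolding M_def P1_def P2_def P3_def by (intro tendsto_intros xl ll)
  have M0: "M 0 = 0"
  proof (rule ccontr)
    assume ne: "M 0 \<noteq> 0"
    have "\<forall>\<^sub>F t in at_right 0. dist (M t) (M 0) < \<bar>M 0\<bar>"
      using tendstoD[OF Ml] ne by auto
    then obtain b where b: "b > 0" "\<And>y. 0 < y \<Longrightarrow> y < b \<Longrightarrow> dist (M y) (M 0) < \<bar>M 0\<bar>"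
      by (auto simp: eventually_at_right_field)
    obtain t where t: "t \<in> {0<..<min b T}" "t \<in> {0..T} \<longrightarrow> M t = 0"
      using AE_exists_Ioo[OF aeM, of 0 "min b T"] b T0 by auto
    hence "M t = 0" by auto
    with b(2)[of t] t(1) show False by (simp add: dist_real_def)
  qed
  obtain t1 where t1: "t1 \<in> {tc<..<tc+\<epsilon>}" "t1 \<in> {0..T} \<longrightarrow> M t1 = 0"
    using AE_exists_Ioo[OF aeM, of tc "tc + \<epsilon>"] tc by auto
  have t1T: "t1 \<in> {0..T}" using t1 tc by auto
  have Mt1: "M t1 = 0" using t1 t1T by auto
  have sw: "switching1 \<alpha> \<beta> (l t1) (x t1) = 0" "switching2 \<alpha> \<beta> (l t1) (x t1) = 0"
    using ts t1(1) unfolding totally_singular_on_def by auto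
  have sa: "sin \<alpha> > 0" using assms by (intro sin_gt_zero) auto
  have sb: "sin \<beta> > 0" using assms by (intro sin_gt_zero) auto
  have cb: "cos \<beta> > 0" using assms by (intro cos_gt_zero) auto
  have P12: "P1 t1 = 0" "P2 t1 = 0" using sw sa sb cb by (auto simp: sw1_eq sw2_eq P1_def P2_def)
  have e1: "cos \<alpha> * P3 t1 + l0 = 0" using Mt1 P12 by (simp add: M_def)
  have lag1: "l t1 \<bullet> l t1 = P3 t1 ^ 2"
    using lagr[of "l t1" "x t1"] P12 lx[OF t1T] xn[OF t1T]
    by (simp add: P1_def P2_def P3_def power2_norm_eq_inner[symmetric])
  have n: "x 0 $ 1 = 0" "x 0 $ 2 = 0" "x 0 $ 3 = 1" using x0 by (simp_all add: north_def)
  have z: "0 \<in> {0..T}" using T0 by auto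
  have l3: "l 0 $ 3 = 0" using lx[OF z] n by (simp add: inner_vec_def sum_3)
  have e0: "\<bar>sin \<alpha> * sin \<beta> * l 0 $ 2\<bar> + \<bar>sin \<alpha> * cos \<beta> * l 0 $ 1\<bar> + l0 = 0"
    using M0 n by (simp add: M_def P1_def P2_def P3_def abs_minus_commute)
  have r0: "l 0 \<bullet> l 0 = (l 0 $ 1)^2 + (l 0 $ 2)^2" using l3 by (simp add: inner_vec_def sum_3 power2_eq_square)
  have rpos: "l 0 \<bullet> l 0 > 0" using lx[OF z] by simp
  have conserv: "l t1 \<bullet> l t1 = l 0 \<bullet> l 0" by (rule norm_const[OF lipC aed t1T])
  define r where "r = l 0 \<bullet> l 0"
  have "l0^2 \<le> ((sin \<alpha> * sin \<beta>)^2 + (sin \<alpha> * cos \<beta>)^2) * ((l 0 $ 2)^2 + (l 0 $ 1)^2)"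
    using cs_ineq[of "sin \<alpha> * sin \<beta>" "l 0 $ 2" "sin \<alpha> * cos \<beta>" "l 0 $ 1"] e0
    by (smt (verit) power2_minus)
  also have "\<dots> = sin \<alpha> ^ 2 * r"
  proof -
    have "(sin \<alpha> * sin \<beta>)^2 + (sin \<alpha> * cos \<beta>)^2 = sin \<alpha>^2 * (sin \<beta>^2 + cos \<beta>^2)"
      by (simp only: power_mult_distrib distrib_left)
    also have "\<dots> = sin \<alpha>^2" by (simp only: sin_cos_squared_add mult_1_right)
    finally show ?thesis unfolding r_def r0 by (simp add: add.commute)
  qed
  finally have i1: "l0^2 \<le> sin \<alpha> ^ 2 * r" .
  have i2: "l0^2 = cos \<alpha> ^ 2 * r"
  proof -
    have "l0 = - (cos \<alpha> * P3 t1)" using e1 by linarith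
    hence "l0^2 = cos \<alpha> ^2 * P3 t1 ^ 2" by (simp add: power_mult_distrib)
    thus ?thesis using lag1 conserv by (simp add: r_def)
  qed
  have "cos \<alpha> ^ 2 * r \<le> sin \<alpha> ^ 2 * r" using i1 i2 by simp
  hence "cos \<alpha> ^ 2 \<le> sin \<alpha> ^ 2" using rpos by (simp add: r_def)
  with sin_lt_cos[OF assms(1,2)] show False by simp
qed

end
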